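(* Let $S$ be a quartic K3 surface ($H$ very ample, $H^2=4$) and let $\tau_q\colon N(S)\to N(S)$ be the map $$\tau_q(r,\Delta,s)=(-r-2s-\Delta\cdot H,\ (r+s+\Delta\cdot H)H-\Delta,\ -2r-s-\Delta\cdot H).$$ Then $\omega=\tfrac12H$, $\beta=-\tfrac12H$ is the only pair $(\omega,\beta)$ of classes in $\mathrm{NS}(S)_{\mathbb Q}$ with $\omega$ ample such that $Z_{\omega,\beta}(r,\Delta,s)=Z_{\omega,\beta}(\tau_q(r,\Delta,s))$ for every $(r,\Delta,s)\in N(S)$.
   Context: $N(S)=H^0(S,\mathbb Z)\oplus\mathrm{NS}(S)\oplus H^4(S,\mathbb Z)$, elements written $(r,\Delta,s)$. For $\omega,\beta\in\mathrm{NS}(S)_{\mathbb Q}$, $Z_{\omega,\beta}(r,\Delta,s)=\tfrac12(2\beta\cdot\Delta-2s+r(\omega^2-\beta^2))+\sqrt{-1}(\Delta-r\beta)\cdot\omega$. ($\tau_q$ is the Hodge isometry induced by the autoequivalence $\mathsf T_{\mathcal O_S}\circ(-\otimes\mathcal O_S(H))\circ\mathsf T_{\mathcal O_S}\circ(-\otimes\mathcal O_S(H))[-1]$.) *)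

theory Defs
  imports Complex_Main
begin

text \<open>Model of NS(S): NS(S) = Z^'n (a free abelian group with basis indexed by the finite
type 'n), with intersection form given by the integer Gram matrix G.  NS(S)_Q = Q^'n.\<close>

definition bilQ :: "('n::finite \<Rightarrow> 'n \<Rightarrow> int) \<Rightarrow> ('n \<Rightarrow> rat) \<Rightarrow> ('n \<Rightarrow> rat) \<Rightarrow> rat" where
  "bilQ G x y = (\<Sum>i\<in>UNIV. \<Sum>j\<in>UNIV. x i * of_int (G i j) * y j)"

definition bilZ :: "('n::finite \<Rightarrow> 'n \<Rightarrow> int) \<Rightarrow> ('n \<Rightarrow> int) \<Rightarrow> ('n \<Rightarrow> int) \<Rightarrow> int" where
  "bilZ G x y = (\<Sum>i\<in>UNIV. \<Sum>j\<in>UNIV. x i * G i j * y j)"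

definition toQ :: "('n \<Rightarrow> int) \<Rightarrow> ('n \<Rightarrow> rat)" where
  "toQ x = (\<lambda>i. of_int (x i))"

text \<open>Ampleness of a Q-class via Nakai--Moishezon, relative to the set of classes of
irreducible curves on S.\<close>
definition ampleQ :: "('n::finite \<Rightarrow> 'n \<Rightarrow> int) \<Rightarrow> ('n \<Rightarrow> int) set \<Rightarrow> ('n \<Rightarrow> rat) \<Rightarrow> bool" where
  "ampleQ G Curves w \<longleftrightarrow> bilQ G w w > 0 \<and> (\<forall>C\<in>Curves. bilQ G w (toQ C) > 0)"

text \<open>Elements (r, Delta, s) of the Mukai lattice N(S) = H^0 + NS(S) + H^4.\<close>
type_synonym 'n mukai = "int \<times> ('n \<Rightarrow> int) \<times> int"

definition tau_q :: "('n::finite \<Rightarrow> 'n \<Rightarrow> int) \<Rightarrow> ('n \<Rightarrow> int) \<Rightarrow> 'n mukai \<Rightarrow> 'n mukai" where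
  "tau_q G H v = (case v of (r, D, s) \<Rightarrow>
     (- r - 2 * s - bilZ G D H,
      (\<lambda>i. (r + s + bilZ G D H) * H i - D i),
      - 2 * r - s - bilZ G D H))"

definition Zstab :: "('n::finite \<Rightarrow> 'n \<Rightarrow> int) \<Rightarrow> ('n \<Rightarrow> rat) \<Rightarrow> ('n \<Rightarrow> rat) \<Rightarrow> 'n mukai \<Rightarrow> complex" where
  "Zstab G w b v = (case v of (r, D, s) \<Rightarrow>
     Complex
       (real_of_rat ((2 * bilQ G b (toQ D) - 2 * of_int s
                      + of_int r * (bilQ G w w - bilQ G b b)) / 2))
       (real_of_rat (bilQ G (\<lambda>i. toQ D i - of_int r * b i) w)))"

end

theory Submission imports Defs begin

lemma bilQ_diff_left: "bilQ G (\<lambda>i. x i - y i) z = bilQ G x z - bilQ G y z"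
  by (simp add: bilQ_def algebra_simps sum_subtractf)
lemma bilQ_add_left: "bilQ G (\<lambda>i. x i + y i) z = bilQ G x z + bilQ G y z"
  by (simp add: bilQ_def algebra_simps sum.distrib)
lemma bilQ_scale_left: "bilQ G (\<lambda>i. c * x i) z = c * bilQ G x z"
  by (simp add: bilQ_def algebra_simps sum_distrib_left)
lemma bilQ_minus_left: "bilQ G (\<lambda>i. - x i) z = - bilQ G x z"
  by (simp add: bilQ_def sum_negf)
lemma bilQ_sym: assumes "\<And>i j. G i j = G j i" shows "bilQ G x y = bilQ G y x"
  unfolding bilQ_def
  by (subst sum.swap) (simp add: assms mult.commute mult.left_commute)
lemma bilQ_diff_right: "bilQ G z (\<lambda>i. x i - y i) = bilQ G z x - bilQ G z y"
  by (simp add: bilQ_def algebra_simps sum_subtractf)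
lemma bilQ_add_right: "bilQ G z (\<lambda>i. x i + y i) = bilQ G z x + bilQ G z y"
  by (simp add: bilQ_def algebra_simps sum.distrib)
lemma bilQ_scale_right: "bilQ G z (\<lambda>i. c * x i) = c * bilQ G z x"
  by (simp add: bilQ_def algebra_simps sum_distrib_left)
lemma bilQ_minus_right: "bilQ G z (\<lambda>i. - x i) = - bilQ G z x"
  by (simp add: bilQ_def sum_negf)
lemma zero_simps[simp]: "toQ (\<lambda>i. 0) = (\<lambda>i. 0)" "bilQ G (\<lambda>i. 0) z = 0" "bilQ G z (\<lambda>i. 0) = 0"
  "bilZ G (\<lambda>i. 0) x = 0"
  by (simp_all add: toQ_def bilQ_def bilZ_def)
lemma bilQ_toQ: "bilQ G (toQ x) (toQ y) = of_int (bilZ G x y)"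
  by (simp add: bilQ_def bilZ_def toQ_def)
lemma toQ_lin: "toQ (\<lambda>i. a * x i - y i) = (\<lambda>i. of_int a * toQ x i - toQ y i)"
  by (simp add: toQ_def)

lemma nondegQ:
  fixes G :: "'n::finite \<Rightarrow> 'n \<Rightarrow> int"
  assumes nondeg: "\<And>x. (\<forall>y. bilZ G x y = 0) \<Longrightarrow> \<forall>i. x i = 0"
    and h: "\<And>y. bilQ G u (toQ y) = 0"
  shows "u = (\<lambda>i. 0)"
proof -
  define d where "d i = snd (quotient_of (u i))" for i
  define n where "n i = fst (quotient_of (u i))" for i
  have dpos: "d i > 0" for i unfolding d_def by (rule quotient_of_denom_pos')
  have ud: "u i = of_int (n i) / of_int (d i)" for i
    unfolding n_def d_def by (rule quotient_of_div) simp
  define N where "N = (\<Prod>j\<in>UNIV. d j)"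
  define m where "m i = n i * (\<Prod>j\<in>UNIV-{i}. d j)" for i
  have Npos: "N > 0" unfolding N_def using dpos by (simp add: prod_pos)
  have mN: "of_int (m i) = of_int N * u i" for i
  proof -
    have "N = d i * (\<Prod>j\<in>UNIV-{i}. d j)"
      unfolding N_def by (simp add: prod.remove)
    then show ?thesis using dpos[of i] by (simp add: m_def ud field_simps)
  qed
  have "\<forall>y. bilZ G m y = 0"
  proof
    fix y
    have "of_int (bilZ G m y) = bilQ G (toQ m) (toQ y)" by (simp add: bilQ_toQ)
    also have "toQ m = (\<lambda>i. of_int N * u i)" by (simp add: toQ_def mN)
    also have "bilQ G (\<lambda>i. of_int N * u i) (toQ y) = 0" by (simp add: bilQ_scale_left h)
    finally show "bilZ G m y = 0" by simp
  qed
  then have "\<forall>i. m i = 0" by (rule nondeg)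
  then show ?thesis using mN Npos by (auto simp: fun_eq_iff)
qed

theorem proposition5p2:
  fixes G :: "'n::finite \<Rightarrow> 'n \<Rightarrow> int"
    and Curves :: "('n \<Rightarrow> int) set"
    and H :: "'n \<Rightarrow> int"
  assumes sym: "\<And>i j. G i j = G j i"
    and even: "\<And>x. even (bilZ G x x)"
    and nondeg: "\<And>x. (\<forall>y. bilZ G x y = 0) \<Longrightarrow> \<forall>i. x i = 0"
    and hodge_index: "\<And>x. bilZ G H x = 0 \<Longrightarrow> \<exists>i. x i \<noteq> 0 \<Longrightarrow> bilZ G x x < 0"
    and rank: "card (UNIV :: 'n set) \<le> 20"
    and curves_sq: "\<And>C. C \<in> Curves \<Longrightarrow> bilZ G C C \<ge> -2"
    and H_curve: "H \<in> Curves"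
    and H_ample: "ampleQ G Curves (toQ H)"
    and H_sq: "bilZ G H H = 4"
  shows "\<forall>w b. (ampleQ G Curves w \<and> (\<forall>v. Zstab G w b v = Zstab G w b (tau_q G H v)))
           \<longleftrightarrow> (w = (\<lambda>i. (1/2) * toQ H i) \<and> b = (\<lambda>i. - (1/2) * toQ H i))"
proof (intro allI iffI)
  note lin = bilQ_diff_left bilQ_add_left bilQ_scale_left bilQ_minus_left
     bilQ_diff_right bilQ_add_right bilQ_scale_right bilQ_minus_right
  define h where "h = toQ H"
  have hh: "bilQ G h h = 4" unfolding h_def using H_sq by (simp add: bilQ_toQ)
  have hD: "bilQ G (toQ D) h = of_int (bilZ G D H)" for D unfolding h_def by (simp add: bilQ_toQ)
  have Dh: "bilQ G h (toQ D) = of_int (bilZ G D H)" for D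
    using hD[of D] bilQ_sym[of G, OF sym, of "toQ D" h] by simp
  fix w b
  {
    assume A: "ampleQ G Curves w \<and> (\<forall>v. Zstab G w b v = Zstab G w b (tau_q G H v))"
    then have Z: "\<forall>v. Zstab G w b v = Zstab G w b (tau_q G H v)" and amp: "ampleQ G Curves w" by auto
    have e3: "Zstab G w b (0,D,0) = Zstab G w b (tau_q G H (0,D,0))" for D using Z by simp
    have im3: "2 * bilQ G (toQ D) w = of_int (bilZ G D H) * bilQ G h w + of_int (bilZ G D H) * bilQ G b w" for D
      using e3[of D] unfolding h_def by (simp add: Zstab_def tau_q_def toQ_lin lin)
    have re3: "bilQ G b (toQ D) * 2 = 2 * (of_int (bilZ G D H) * bilQ G b h - bilQ G b (toQ D)) + 2 * of_int (bilZ G D H) - of_int (bilZ G D H) * (bilQ G w w - bilQ G b b)" for D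
      using e3[of D] unfolding h_def by (simp add: Zstab_def tau_q_def toQ_lin lin)
    have e1: "Zstab G w b (1,(\<lambda>i. 0),0) = Zstab G w b (tau_q G H (1,(\<lambda>i. 0),0))" using Z by simp
    have im1: "- bilQ G b w = bilQ G h w + bilQ G b w"
      using e1 unfolding h_def by (simp add: Zstab_def tau_q_def toQ_lin lin)
    have re1: "(bilQ G w w - bilQ G b b) * 2 = 2 * bilQ G b h + 4"
      using e1 unfolding h_def by (simp add: Zstab_def tau_q_def toQ_lin lin)
    define c1 where "c1 = (bilQ G h w + bilQ G b w) / 2"
    define c2 where "c2 = (2 * bilQ G b h + 2 - (bilQ G w w - bilQ G b b)) / 4"
    have "(\<lambda>i. 2 * c1 * h i - 2 * w i) = (\<lambda>i. 0)"
    proof (rule nondegQ[OF nondeg])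
      fix D
      show "bilQ G (\<lambda>i. 2 * c1 * h i - 2 * w i) (toQ D) = 0"
        using im3[of D] bilQ_sym[of G, OF sym, of w "toQ D"]
        by (simp only: lin Dh) (simp add: c1_def algebra_simps)
    qed
    then have wc: "w = (\<lambda>i. c1 * h i)" by (auto simp: fun_eq_iff)
    have "(\<lambda>i. 4 * c2 * h i - 4 * b i) = (\<lambda>i. 0)"
    proof (rule nondegQ[OF nondeg])
      fix D
      show "bilQ G (\<lambda>i. 4 * c2 * h i - 4 * b i) (toQ D) = 0"
        using re3[of D] bilQ_sym[of G, OF sym, of b "toQ D"]
        by (simp only: lin Dh) (simp add: c2_def algebra_simps)
    qed
    then have bc: "b = (\<lambda>i. c2 * h i)" by (auto simp: fun_eq_iff)
    have "bilQ G w h > 0" using amp H_curve unfolding ampleQ_def h_def by auto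
    then have c1pos: "c1 > 0" unfolding wc by (simp add: lin hh)
    have "c1 * (1 + 2 * c2) = 0" using im1 unfolding wc bc by (simp add: lin hh algebra_simps)
    then have c2v: "c2 = -1/2" using c1pos by simp
    have "(c1 - 1/2) * (c1 + 1/2) = 0" using re1 unfolding wc bc by (simp only: lin hh) (simp add: c2v algebra_simps)
    then have c1v: "c1 = 1/2" using c1pos by auto
    show "w = (\<lambda>i. (1/2) * toQ H i) \<and> b = (\<lambda>i. - (1/2) * toQ H i)"
      using wc bc c2v c1v unfolding h_def by simp
  next
    assume B: "w = (\<lambda>i. (1/2) * toQ H i) \<and> b = (\<lambda>i. - (1/2) * toQ H i)"
    then have wv: "w = (\<lambda>i. (1/2) * h i)" and bv: "b = (\<lambda>i. (-1/2) * h i)" unfolding h_def by auto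
    have "ampleQ G Curves w"
      using H_ample unfolding ampleQ_def wv h_def[symmetric] by (simp only: lin hh) simp
    moreover have "Zstab G w b v = Zstab G w b (tau_q G H v)" for v
    proof -
      obtain r D s where v: "v = (r, D, s)" by (cases v) auto
      show ?thesis unfolding v wv bv Zstab_def tau_q_def prod.case toQ_lin h_def[symmetric]
        by (simp only: lin hh hD Dh) (simp add: algebra_simps)
    qed
    ultimately show "ampleQ G Curves w \<and> (\<forall>v. Zstab G w b v = Zstab G w b (tau_q G H v))" by auto
  }
qed

end
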